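(* Every element $\theta$ of the Thompson group $T$ is piecewise dynamical: for every interval of linearity $I$ of $\theta$ there exist $m,n\in\mathbb{N}_0$ such that $g^m\circ\theta=g^n$ on $I$.
   Context: $\mathbb{T}$ is the unit circle with angular coordinate $\theta\in\mathbb{R}/\mathbb{Z}$; dyadic points are those with angular coordinate $k/2^j$. $g(z)=z^2$ is the doubling map of $\mathbb{T}$. The Thompson group $T$ is the group of orientation-preserving homeomorphisms of $\mathbb{T}$ that are piecewise linear in the angular coordinate with finitely many break points, all dyadic, with slopes integer powers of $2$, and mapping dyadic points to dyadic points. *)

theory Defs
  imports "HOL-Analysis.Analysis"
begin

text \<open>The circle T = R/Z is represented by angular coordinates in [0,1); a point of
  R is projected to the circle by frac. A circle homeomorphism is represented by
  a lift F : R -> R (F(x+1) = F x + 1).\<close>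

definition dyadic :: "real \<Rightarrow> bool" where
  "dyadic x \<longleftrightarrow> (\<exists>k::int. \<exists>j::nat. x = of_int k / 2 ^ j)"

text \<open>Doubling map g(z) = z^2 in the angular coordinate.\<close>
definition doubling :: "real \<Rightarrow> real" where
  "doubling t = frac (2 * t)"

definition affine_on_ivl :: "(real \<Rightarrow> real) \<Rightarrow> real \<Rightarrow> real \<Rightarrow> bool" where
  "affine_on_ivl F a b \<longleftrightarrow> (\<exists>s c. \<forall>x\<in>{a..b}. F x = s * x + c)"

definition thompson_T_lift :: "(real \<Rightarrow> real) \<Rightarrow> bool" where
  "thompson_T_lift F \<longleftrightarrow>
     continuous_on UNIV F \<and> strict_mono F \<and> (\<forall>x. F (x + 1) = F x + 1) \<and>
     (\<exists>P. finite P \<and> P \<subseteq> {0..<1} \<and> (\<forall>p\<in>P. dyadic p) \<and>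
        (\<forall>p q. p < q \<and> {p<..<q} \<inter> {p' + of_int n | p' n. p' \<in> P} = {} \<longrightarrow>
           (\<exists>k::int. \<exists>c. \<forall>x\<in>{p..q}. F x = 2 powi k * x + c))) \<and>
     (\<forall>x. dyadic x \<longrightarrow> dyadic (F x))"

text \<open>Interval of linearity (in the lift): a maximal closed arc [a,b] (of length at
  most one, i.e. an arc of the circle) on which F is affine.\<close>
definition interval_of_linearity :: "(real \<Rightarrow> real) \<Rightarrow> real \<Rightarrow> real \<Rightarrow> bool" where
  "interval_of_linearity F a b \<longleftrightarrow>
     a < b \<and> b \<le> a + 1 \<and> affine_on_ivl F a b \<and>
     (\<forall>a' b'. a' \<le> a \<and> b \<le> b' \<and> b' \<le> a' + 1 \<and> affine_on_ivl F a' b' \<longrightarrow> a' = a \<and> b' = b)"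

end

theory Submission
  imports Defs
begin

lemma doubling_iter: "(doubling ^^ m) (frac y) = frac (2 ^ m * y)"
proof (induction m)
  case 0 then show ?case by simp
next
  case (Suc m)
  have "(doubling ^^ Suc m) (frac y) = frac (2 * frac (2 ^ m * y))"
    using Suc by (simp only: funpow.simps comp_def) (simp add: doubling_def)
  also have "2 * frac (2 ^ m * y) = 2 ^ Suc m * y + of_int (- 2 * \<lfloor>2 ^ m * y\<rfloor>)"
    by (simp add: frac_def algebra_simps)
  also have "frac \<dots> = frac (2 ^ Suc m * y)" by (rule frac_add_of_int_right)
  finally show ?case .
qed

lemma dyadic_in_ivl:
  fixes a q :: real assumes "a < q"
  shows "\<exists>u::int. \<exists>j::nat. a \<le> of_int u / 2 ^ j \<and> of_int u / 2 ^ j \<le> q"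
proof -
  obtain j :: nat where j: "1 / (q - a) < 2 ^ j"
    using real_arch_pow[of 2 "1 / (q - a)"] by auto
  have pos: "(0::real) < 2 ^ j" by simp
  have "1 < (q - a) * 2 ^ j" using j assms by (simp add: field_simps)
  define u where "u = \<lceil>a * 2 ^ j\<rceil>"
  have u1: "a * 2 ^ j \<le> of_int u" unfolding u_def by simp
  have u2: "of_int u < a * 2 ^ j + 1" unfolding u_def by linarith
  have "a \<le> of_int u / 2 ^ j" using u1 pos by (simp add: field_simps)
  moreover have "of_int u / 2 ^ j \<le> q"
    using u2 \<open>1 < (q - a) * 2 ^ j\<close> pos by (simp add: field_simps)
  ultimately show ?thesis by blast
qed

theorem corollary5p3:
  fixes F :: "real \<Rightarrow> real" and a b :: real
  assumes "thompson_T_lift F"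
    and "interval_of_linearity F a b"
  shows "\<exists>m n :: nat. \<forall>x\<in>{a..b}. (doubling ^^ m) (frac (F x)) = (doubling ^^ n) (frac x)"
proof -
  from assms(2) have ab: "a < b" and "affine_on_ivl F a b"
    unfolding interval_of_linearity_def by auto
  then obtain s c where sc: "\<forall>x\<in>{a..b}. F x = s * x + c" unfolding affine_on_ivl_def by auto
  from assms(1) obtain P where Pfin: "finite P" and Psub: "P \<subseteq> {0..<1}"
    and Plin: "\<forall>p q. p < q \<and> {p<..<q} \<inter> {p' + of_int n | p' n. p' \<in> P} = {} \<longrightarrow>
           (\<exists>k::int. \<exists>c. \<forall>x\<in>{p..q}. F x = 2 powi k * x + c)"
    and dy: "\<forall>x. dyadic x \<longrightarrow> dyadic (F x)"
    unfolding thompson_T_lift_def by blast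
  define Q where "Q = {p' + of_int n | p' n. p' \<in> P}"
  have QS: "Q \<inter> {a<..<b} \<subseteq> (\<lambda>(p',n). p' + of_int n) ` (P \<times> {\<lfloor>a\<rfloor> - 1..\<lceil>b\<rceil>})"
  proof
    fix x assume "x \<in> Q \<inter> {a<..<b}"
    then obtain p' n where x: "x = p' + of_int n" "p' \<in> P" "a < x" "x < b" unfolding Q_def by auto
    with Psub have "0 \<le> p'" "p' < 1" by auto
    with x have "n \<in> {\<lfloor>a\<rfloor> - 1..\<lceil>b\<rceil>}"
      by (auto, linarith+)
    with x show "x \<in> (\<lambda>(p',n). p' + of_int n) ` (P \<times> {\<lfloor>a\<rfloor> - 1..\<lceil>b\<rceil>})" by force
  qed
  have Qfin: "finite (insert b (Q \<inter> {a<..<b}))"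
    using finite_subset[OF QS] Pfin by auto
  define q where "q = Min (insert b (Q \<inter> {a<..<b}))"
  have qle: "q \<le> b" unfolding q_def using Qfin by auto
  have aq: "a < q" unfolding q_def using Qfin ab by (subst Min_gr_iff) auto
  have "{a<..<q} \<inter> Q = {}"
  proof (rule ccontr)
    assume "{a<..<q} \<inter> Q \<noteq> {}"
    then obtain y where y: "a < y" "y < q" "y \<in> Q" by auto
    with qle have "y \<in> insert b (Q \<inter> {a<..<b})" by auto
    hence "q \<le> y" unfolding q_def using Qfin by simp
    with y show False by simp
  qed
  then obtain k :: int and c' where kc: "\<forall>x\<in>{a..q}. F x = 2 powi k * x + c'"
    using Plin aq unfolding Q_def by blast
  have e1: "s * a + c = 2 powi k * a + c'" using kc sc aq qle ab by auto
  have e2: "s * q + c = 2 powi k * q + c'" using kc sc aq qle ab by auto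
  have "(s - 2 powi k) * (q - a) = 0" using e1 e2 by (simp add: algebra_simps)
  hence s: "s = 2 powi k" using aq by simp
  hence cc: "c = c'" using e1 by simp
  obtain u :: int and j :: nat where d: "a \<le> of_int u / 2 ^ j" "of_int u / 2 ^ j \<le> q"
    using dyadic_in_ivl[OF aq] by blast
  define d where "d = (of_int u / 2 ^ j :: real)"
  have "dyadic d" unfolding dyadic_def d_def by blast
  with dy obtain v :: int and J :: nat where FD: "F d = of_int v / 2 ^ J"
    unfolding dyadic_def by blast
  have Fd: "F d = 2 powi k * d + c" using sc s d qle unfolding d_def[symmetric] by auto
  define m :: nat where "m = J + j + nat (- k)"
  define n :: nat where "n = nat (int m + k)"
  have mn: "(2::real) ^ m * 2 powi k = 2 ^ n"
  proof -
    have "int m + k \<ge> 0" unfolding m_def by simp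
    hence "(2::real) ^ n = 2 powi (int m + k)" unfolding n_def
      by (simp add: power_int_def)
    also have "\<dots> = 2 powi (int m) * 2 powi k" by (simp add: power_int_add)
    finally show ?thesis by simp
  qed
  have mnj: "n = nat (k + int (nat (-k))) + J + j" unfolding n_def m_def by (simp add: nat_add_distrib)
  define r :: nat where "r = nat (k + int (nat (-k)))"
  have nr: "n = r + J + j" using mnj r_def by simp
  have cint: "2 ^ m * c \<in> \<int>"
  proof -
    have cv: "c = of_int v / 2 ^ J - 2 powi k * d" using FD Fd by simp
    hence "2 ^ m * c = 2 ^ m * (of_int v / 2 ^ J) - 2 ^ n * d"
    proof -
      have "2 ^ m * c = 2 ^ m * (of_int v / 2 ^ J) - (2 ^ m * 2 powi k) * d"
        unfolding cv by (simp add: right_diff_distrib mult.assoc)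
      thus ?thesis using mn by simp
    qed
    also have "(2::real) ^ m * (of_int v / 2 ^ J) = of_int v * 2 ^ (j + nat (-k))"
      unfolding m_def by (simp add: power_add)
    also have "(2::real) ^ n * d = of_int u * 2 ^ (r + J)"
      unfolding d_def nr by (simp add: power_add)
    finally show ?thesis by simp
  qed
  then obtain Z where Z: "2 ^ m * c = of_int Z" by (auto elim: Ints_cases)
  show ?thesis
  proof (intro exI ballI)
    fix x assume "x \<in> {a..b}"
    hence "F x = 2 powi k * x + c" using sc s by auto
    hence "2 ^ m * F x = 2 ^ n * x + of_int Z" using mn Z by (simp add: algebra_simps)
    thus "(doubling ^^ m) (frac (F x)) = (doubling ^^ n) (frac x)"
      by (simp add: doubling_iter)
  qed
qed

end
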